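(* Let $\Omega\subset\mathbb{R}^N$ be a bounded domain with smooth boundary, $0<s<1$, $M$ a Young function satisfying $1<m_0:=\inf_{t>0}\frac{tm(t)}{M(t)}\le m^0:=\sup_{t>0}\frac{tm(t)}{M(t)}<\infty$, (S) $t\mapsto M(\sqrt t)$ convex on $[0,\infty)$, and (Q) $\lim_{t\to+\infty}|t|^q/M(t)=0$, where $1<q<\min(p^*,m_0)$, $p^*=Np/(N-p)$ for a fixed $1<p<N$. Let $g:\Omega\times\mathbb{R}\to\mathbb{R}$ be Carathéodory with $G(x,t)=\int_0^t g(x,\tau)d\tau$ satisfying (A) $|g(x,t)|\le C_0|t|^{q-1}$ and (B) $C_1|t|^q\le G(x,t)\le C_2|t|^q$ for all $x\in\Omega,t\in\mathbb{R}$, with $C_0,C_1,C_2>0$. Let $$I_\lambda(u)=\int_{\mathbb{R}^N}\int_{\mathbb{R}^N}M\Big(\frac{u(x)-u(y)}{|x-y|^s}\Big)\frac{dx\,dy}{|x-y|^N}-\lambda\int_\Omega G(x,u)\,dx.$$ Then there exists $\lambda^*>0$ such that for every $\lambda\in(0,\lambda^* )$ there exist $\rho>0$ and $\alpha>0$ with $I_\lambda(u)\ge\alpha$ for all $u\in\tilde W^{s,M}_0(\Omega)$ with $\|u\|=\rho$.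
   Context: A Young function is $M(t)=\int_0^{|t|}m(\tau)\,d\tau$, where $m:\mathbb{R}\to\mathbb{R}$ is an increasing homeomorphism of $\mathbb{R}$ onto $\mathbb{R}$ with $m(0)=0$, $m(t)>0$ for $t>0$, $m(t)\to\infty$ as $t\to\infty$. $L^M$ is the Orlicz space with Luxemburg norm $\|u\|_{(M)}=\inf\{\lambda>0:\int M(u/\lambda)\le1\}$. $W^{s,M}(\mathbb{R}^N)$ is the set of $u\in L^M(\mathbb{R}^N)$ with $\int\int M\big(\frac{u(x)-u(y)}{|x-y|^s}\big)\frac{dxdy}{|x-y|^N}<\infty$, with seminorm $[u]_{(s,M)}=\inf\{\lambda>0:\int\int M\big(\frac{u(x)-u(y)}{\lambda|x-y|^s}\big)\frac{dxdy}{|x-y|^N}\le1\}$ and norm $\|u\|_{(s,M)}=\|u\|_{(M)}+[u]_{(s,M)}$. $\tilde W^{s,M}_0(\Omega)$ is the space of functions in the closure $W^{s,M}_0(\Omega)$ of $C_c^\infty(\Omega)$ in $\|\cdot\|_{(s,M)}$ which vanish a.e. in $\mathbb{R}^N\setminus\Omega$, normed by $\|u\|=[u]_{(s,M)}$. *)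

theory Defs
  imports "HOL-Analysis.Analysis"
begin

inductive_set iter_partials :: "('a::euclidean_space \<Rightarrow> real) \<Rightarrow> ('a \<Rightarrow> real) set"
  for f :: "'a \<Rightarrow> real" where
  base: "f \<in> iter_partials f"
| step: "g \<in> iter_partials f \<Longrightarrow> b \<in> Basis \<Longrightarrow>
           (\<lambda>x. frechet_derivative g (at x) b) \<in> iter_partials f"

definition smooth_fun :: "('a::euclidean_space \<Rightarrow> real) \<Rightarrow> bool" where
  "smooth_fun f \<longleftrightarrow> (\<forall>g \<in> iter_partials f. \<forall>x. g differentiable (at x))"

definition Cc_inf :: "'a::euclidean_space set \<Rightarrow> ('a \<Rightarrow> real) set" where
  "Cc_inf \<Omega> = {\<phi>. smooth_fun \<phi> \<and> compact (closure {x. \<phi> x \<noteq> 0})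
                     \<and> closure {x. \<phi> x \<noteq> 0} \<subseteq> \<Omega>}"

definition smooth_bounded_domain :: "'a::euclidean_space set \<Rightarrow> bool" where
  "smooth_bounded_domain \<Omega> \<longleftrightarrow> open \<Omega> \<and> connected \<Omega> \<and> \<Omega> \<noteq> {} \<and> bounded \<Omega> \<and>
     (\<forall>z \<in> frontier \<Omega>. \<exists>r>0. \<exists>\<psi>. smooth_fun \<psi> \<and> frechet_derivative \<psi> (at z) \<noteq> (\<lambda>_. 0) \<and>
         \<Omega> \<inter> ball z r = {x \<in> ball z r. \<psi> x < 0})"

definition young_density :: "(real \<Rightarrow> real) \<Rightarrow> bool" where
  "young_density m \<longleftrightarrow> strict_mono m \<and> continuous_on UNIV m \<and> surj m \<and> m 0 = 0 \<and>
     (\<forall>t>0. m t > 0) \<and> filterlim m at_top at_top"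

definition young_fun :: "(real \<Rightarrow> real) \<Rightarrow> real \<Rightarrow> real" where
  "young_fun m t = integral {0..\<bar>t\<bar>} m"

definition lower_index :: "(real \<Rightarrow> real) \<Rightarrow> real" where
  "lower_index m = Inf {t * m t / young_fun m t | t. t > 0}"

definition orlicz_modular :: "(real \<Rightarrow> real) \<Rightarrow> ('a::euclidean_space \<Rightarrow> real) \<Rightarrow> ennreal" where
  "orlicz_modular M u = (\<integral>\<^sup>+ x. ennreal (M (u x)) \<partial>lborel)"

definition in_orlicz :: "(real \<Rightarrow> real) \<Rightarrow> ('a::euclidean_space \<Rightarrow> real) \<Rightarrow> bool" where
  "in_orlicz M u \<longleftrightarrow> u \<in> borel_measurable lborel \<and>
     (\<exists>l>0. orlicz_modular M (\<lambda>x. u x / l) < \<infinity>)"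

definition lux_norm :: "(real \<Rightarrow> real) \<Rightarrow> ('a::euclidean_space \<Rightarrow> real) \<Rightarrow> ennreal" where
  "lux_norm M u = Inf {ennreal l | l. l > 0 \<and> orlicz_modular M (\<lambda>x. u x / l) \<le> 1}"

definition frac_modular :: "real \<Rightarrow> (real \<Rightarrow> real) \<Rightarrow> ('a::euclidean_space \<Rightarrow> real) \<Rightarrow> ennreal" where
  "frac_modular s M u = (\<integral>\<^sup>+ x. \<integral>\<^sup>+ y.
      ennreal (M ((u x - u y) / norm (x - y) powr s) / norm (x - y) ^ DIM('a)) \<partial>lborel \<partial>lborel)"

definition frac_seminorm :: "real \<Rightarrow> (real \<Rightarrow> real) \<Rightarrow> ('a::euclidean_space \<Rightarrow> real) \<Rightarrow> ennreal" where
  "frac_seminorm s M u = Inf {ennreal l | l. l > 0 \<and> frac_modular s M (\<lambda>x. u x / l) \<le> 1}"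

definition frac_norm :: "real \<Rightarrow> (real \<Rightarrow> real) \<Rightarrow> ('a::euclidean_space \<Rightarrow> real) \<Rightarrow> ennreal" where
  "frac_norm s M u = lux_norm M u + frac_seminorm s M u"

definition W_sM :: "real \<Rightarrow> (real \<Rightarrow> real) \<Rightarrow> ('a::euclidean_space \<Rightarrow> real) set" where
  "W_sM s M = {u. in_orlicz M u \<and> frac_modular s M u < \<infinity>}"

definition W0_tilde :: "real \<Rightarrow> (real \<Rightarrow> real) \<Rightarrow> 'a::euclidean_space set \<Rightarrow> ('a \<Rightarrow> real) set" where
  "W0_tilde s M \<Omega> = {u. u \<in> W_sM s M \<and>
       (\<exists>\<phi>. (\<forall>k. \<phi> k \<in> Cc_inf \<Omega>) \<and> ((\<lambda>k. frac_norm s M (\<lambda>x. \<phi> k x - u x)) \<longlonglongrightarrow> 0)) \<and>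
       (AE x in lborel. x \<notin> \<Omega> \<longrightarrow> u x = 0)}"

definition caratheodory :: "'a::euclidean_space set \<Rightarrow> ('a \<Rightarrow> real \<Rightarrow> real) \<Rightarrow> bool" where
  "caratheodory \<Omega> g \<longleftrightarrow> (\<forall>t. (\<lambda>x. g x t) \<in> borel_measurable (restrict_space lborel \<Omega>)) \<and>
     (AE x in lborel. x \<in> \<Omega> \<longrightarrow> continuous_on UNIV (g x))"

definition primitive :: "('a \<Rightarrow> real \<Rightarrow> real) \<Rightarrow> 'a \<Rightarrow> real \<Rightarrow> real" where
  "primitive g x t = (LBINT \<tau>=ereal 0..ereal t. g x \<tau>)"

definition energy :: "real \<Rightarrow> (real \<Rightarrow> real) \<Rightarrow> 'a::euclidean_space set \<Rightarrow> ('a \<Rightarrow> real \<Rightarrow> real)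
    \<Rightarrow> real \<Rightarrow> ('a \<Rightarrow> real) \<Rightarrow> real" where
  "energy s M \<Omega> g lam u = enn2real (frac_modular s M u)
      - lam * (LINT x:\<Omega>|lborel. primitive g x (u x))"

end

theory Submission
  imports Defs
begin

lemma yd_nonneg: assumes "young_density m" "0 \<le> x" shows "0 \<le> m x"
  using assms unfolding young_density_def strict_mono_def
  by (metis dual_order.order_iff_strict)

lemma yf_mono: assumes "young_density m" "\<bar>a\<bar> \<le> \<bar>b\<bar>" shows "young_fun m a \<le> young_fun m b"
proof -
  have c: "continuous_on UNIV m" using assms(1) unfolding young_density_def by auto
  have "m integrable_on {0..\<bar>b\<bar>}" "m integrable_on {0..\<bar>a\<bar>}"
    by (rule integrable_continuous_interval, metis c continuous_on_subset subset_UNIV)+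
  then show ?thesis unfolding young_fun_def
    by (intro integral_subset_le) (use assms yd_nonneg in auto)
qed

lemma yf_nonneg: assumes "young_density m" shows "0 \<le> young_fun m t"
proof -
  have "young_fun m 0 \<le> young_fun m t" by (rule yf_mono[OF assms]) simp
  then show ?thesis by (simp add: young_fun_def)
qed

lemma yf_meas: assumes "young_density m" shows "young_fun m \<in> borel_measurable borel"
proof -
  define h where "h r = integral {0..r} m" for r :: real
  have "mono h"
  proof
    fix a b :: real assume ab: "a \<le> b"
    show "h a \<le> h b"
    proof (cases "a < 0")
      case True
      then have "h a = 0" by (simp add: h_def)
      moreover have "0 \<le> h b"
      proof (cases "b < 0")
        case True then show ?thesis by (simp add: h_def)
      next
        case False then have "h b = young_fun m b" by (simp add: h_def young_fun_def)
        then show ?thesis using yf_nonneg[OF assms] by simp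
      qed
      ultimately show ?thesis by simp
    next
      case False
      then have "h a = young_fun m a" "h b = young_fun m b" using ab by (simp_all add: h_def young_fun_def)
      then show ?thesis using yf_mono[OF assms, of a b] ab False by simp
    qed
  qed
  then have "h \<in> borel_measurable borel" by (rule borel_measurable_mono)
  moreover have "young_fun m = (\<lambda>t. h \<bar>t\<bar>)" by (auto simp: h_def young_fun_def)
  ultimately show ?thesis by (simp add: measurable_compose[OF borel_measurable_abs])
qed

lemma yf_pos: assumes "young_density m" "1 < lower_index m" "t > 0" shows "young_fun m t > 0"
proof (rule ccontr)
  assume "\<not> ?thesis"
  then have z: "young_fun m t = 0" using yf_nonneg[OF assms(1), of t] by simp
  let ?S = "{t * m t / young_fun m t | t. t > 0}"
  have "0 \<in> ?S" using z assms(3) by force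
  moreover have "bdd_below ?S"
    by (rule bdd_belowI[of _ 0]) (auto intro!: divide_nonneg_nonneg mult_nonneg_nonneg yd_nonneg[OF assms(1)] yf_nonneg[OF assms(1)])
  ultimately have "Inf ?S \<le> 0" by (rule cInf_lower)
  then show False using assms(2) unfolding lower_index_def by simp
qed


lemma powr_bound:
  fixes M :: "real \<Rightarrow> real"
  assumes Mev: "\<And>t. M t = M \<bar>t\<bar>" and T: "\<And>t. t \<ge> T \<Longrightarrow> t powr q \<le> M t"
    and Mnn: "\<And>t. 0 \<le> M t" and T0: "T \<ge> 0" and D: "D > 0" and q: "q > 0" and s: "s > 0"
  shows "\<bar>t\<bar> powr q \<le> D powr (s*q) * (T powr q + M (t / D powr s))"
proof -
  define r where "r = \<bar>t\<bar> / D powr s"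
  have r0: "r \<ge> 0" using D by (simp add: r_def)
  have tr: "\<bar>t\<bar> = D powr s * r" using D by (simp add: r_def)
  have "\<bar>t\<bar> powr q = D powr (s*q) * r powr q"
    using tr D r0 by (simp add: powr_mult powr_powr)
  moreover have "r powr q \<le> T powr q + M (t / D powr s)"
  proof (cases "r \<ge> T")
    case True
    have "M (t / D powr s) = M r" using Mev[of "t / D powr s"] D by (simp add: r_def abs_divide)
    moreover have "T powr q \<ge> 0" by simp
    ultimately show ?thesis using T[OF True] by linarith
  next
    case False
    have "r powr q \<le> T powr q" using False r0 q by (intro powr_mono2) auto
    then show ?thesis using Mnn[of "t / D powr s"] by linarith
  qed
  ultimately show ?thesis using D by (simp add: mult_left_mono)
qed

theorem lemma4p1:
  fixes \<Omega> :: "'a::euclidean_space set"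
    and s p q C0 C1 C2 :: real
    and m :: "real \<Rightarrow> real"
    and g :: "'a \<Rightarrow> real \<Rightarrow> real"
  defines "M \<equiv> young_fun m"
  assumes dom: "smooth_bounded_domain \<Omega>"
    and s: "0 < s" "s < 1"
    and m: "young_density m"
    and ind: "1 < lower_index m" "bdd_above {t * m t / M t | t. t > 0}"
    and S: "convex_on {0..} (\<lambda>t. M (sqrt t))"
    and p: "1 < p" "p < real DIM('a)"
    and q: "1 < q" "q < real DIM('a) * p / (real DIM('a) - p)" "q < lower_index m"
    and Q: "((\<lambda>t. \<bar>t\<bar> powr q / M t) \<longlongrightarrow> 0) at_top"
    and car: "caratheodory \<Omega> g"
    and C: "C0 > 0" "C1 > 0" "C2 > 0"
    and A: "\<forall>x\<in>\<Omega>. \<forall>t. \<bar>g x t\<bar> \<le> C0 * \<bar>t\<bar> powr (q - 1)"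
    and B: "\<forall>x\<in>\<Omega>. \<forall>t. C1 * \<bar>t\<bar> powr q \<le> primitive g x t \<and> primitive g x t \<le> C2 * \<bar>t\<bar> powr q"
  shows "\<exists>lam_star>0. \<forall>lam\<in>{0<..<lam_star}. \<exists>\<rho>>0. \<exists>\<alpha>>0.
           \<forall>u \<in> W0_tilde s M \<Omega>. frac_seminorm s M u = ennreal \<rho> \<longrightarrow> energy s M \<Omega> g lam u \<ge> \<alpha>"
  proof -
  have yd: "young_density m" by (rule m)
  have Mev: "\<And>t. M t = M \<bar>t\<bar>" by (simp add: M_def young_fun_def)
  have Mnn: "\<And>t. 0 \<le> M t" unfolding M_def by (rule yf_nonneg[OF yd])
  have Mmono: "\<And>a b. \<bar>a\<bar> \<le> \<bar>b\<bar> \<Longrightarrow> M a \<le> M b" unfolding M_def by (rule yf_mono[OF yd])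
  have Mmeas: "M \<in> borel_measurable borel" unfolding M_def by (rule yf_meas[OF yd])
  have Mpos: "\<And>t. t > 0 \<Longrightarrow> M t > 0" unfolding M_def by (rule yf_pos[OF yd ind(1)])
  have q0: "q > 0" using q by simp
  have "\<forall>\<^sub>F t in at_top. \<bar>t\<bar> powr q / M t < 1"
    using Q by (rule order_tendstoD) simp
  then obtain T0 where T0: "\<And>t. t \<ge> T0 \<Longrightarrow> \<bar>t\<bar> powr q / M t < 1"
    by (auto simp: eventually_at_top_linorder)
  define T where "T = max T0 1"
  have T1: "T \<ge> 0" by (simp add: T_def)
  have Tb: "t powr q \<le> M t" if "t \<ge> T" for t
  proof -
    have "t > 0" "t \<ge> T0" using that by (auto simp: T_def)
    then show ?thesis using T0[of t] Mpos[of t] by (simp add: divide_less_eq)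
  qed
  have Omeas: "\<Omega> \<in> sets lborel" using dom by (simp add: smooth_bounded_domain_def)
  have bdd: "bounded \<Omega>" using dom by (simp add: smooth_bounded_domain_def)
  then obtain R where R: "R > 0" "\<Omega> \<subseteq> ball 0 R" using bounded_subset_ballD by blast
  obtain b0 :: 'a where b0: "b0 \<in> Basis" using nonempty_Basis by blast
  have nb0: "norm b0 = 1" using b0 by simp
  define c where "c = (R + 2) *\<^sub>R b0"
  have nc: "norm c = R + 2" using R nb0 by (simp add: c_def)
  define E where "E = ball c 1"
  define D where "D = 2 * R + 3"
  have D0: "D > 0" using R by (simp add: D_def)
  have Eout: "y \<notin> \<Omega>" if "y \<in> E" for y
  proof -
    have "norm c - norm y \<le> norm (c - y)" by (rule norm_triangle_ineq2)
    moreover have "norm (c - y) < 1" using that by (simp add: E_def dist_norm)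
    ultimately have "norm y \<ge> R" using nc by simp
    then show ?thesis using R by auto
  qed
  have dist_le: "0 < norm (x - y) \<and> norm (x - y) \<le> D" if "x \<in> \<Omega>" "y \<in> E" for x y
  proof
    show "0 < norm (x - y)" using that Eout by auto
    have "norm y - norm c \<le> norm (y - c)" by (rule norm_triangle_ineq2)
    moreover have "norm (y - c) < 1" using that by (simp add: E_def dist_norm norm_minus_commute)
    moreover have "norm x < R" using that R by auto
    moreover have "norm (x - y) \<le> norm x + norm y" by (rule norm_triangle_ineq4)
    ultimately show "norm (x - y) \<le> D" using nc by (simp add: D_def)
  qed
  define e where "e = measure lborel E"
  have e0: "e > 0" using content_ball_pos[of 1 c] by (simp add: e_def E_def)
  have eE: "emeasure lborel E = ennreal e"
    unfolding e_def E_def using emeasure_lborel_ball_finite[of c 1]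
    by (intro emeasure_eq_ennreal_measure) simp
  define v where "v = measure lborel \<Omega>"
  have vO: "emeasure lborel \<Omega> = ennreal v"
    unfolding v_def using emeasure_bounded_finite[OF bdd]
    by (intro emeasure_eq_ennreal_measure) simp
  have v0: "v \<ge> 0" by (simp add: v_def)
  define N where "N = DIM('a)"
  define K1 where "K1 = C2 * D powr (s*q) * T powr q"
  define K2 where "K2 = C2 * D powr (s*q)"
  define a where "a = K2 * D ^ N / e"
  define b where "b = K1 * v"
  have a0: "a \<ge> 0" using C e0 D0 by (simp add: a_def K2_def)
  have b0': "b \<ge> 0" using C v0 D0 by (simp add: b_def K1_def)
  define ls where "ls = 1 / (2 * a + 4 * b + 1)"
  have ls0: "ls > 0" using a0 b0' by (simp add: ls_def)
  show ?thesis
  proof (rule exI[of _ ls], intro conjI ls0 ballI)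
    fix lam :: real
    assume lam: "lam \<in> {0<..<ls}"
    show "\<exists>\<rho>>0. \<exists>\<alpha>>0. \<forall>u \<in> W0_tilde s M \<Omega>. frac_seminorm s M u = ennreal \<rho> \<longrightarrow> energy s M \<Omega> g lam u \<ge> \<alpha>"
    proof (rule exI[of _ "2::real"], simp only: zero_less_numeral simp_thms, rule exI[of _ "1/4::real"], intro conjI ballI impI)
    show "(0::real) < 1/4" by simp
    fix u
    assume u: "u \<in> W0_tilde s M \<Omega>" and sn: "frac_seminorm s M u = ennreal 2"
    have lam0: "lam > 0" "lam < ls" using lam by auto
    have "lam * (2*a+4*b+1) < 1" using lam0 a0 b0' by (simp add: ls_def field_simps)
    moreover have "lam*(2*a+4*b+1) = 2*(lam*a) + 4*(lam*b) + lam" by algebra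
    moreover have "lam * a \<ge> 0" "lam * b \<ge> 0" using lam0 a0 b0' by auto
    ultimately have lama: "lam * a \<le> 1/2" and lamb: "lam * b \<le> 1/4" using lam0 by linarith+
    have um: "u \<in> borel_measurable lborel" using u by (simp add: W0_tilde_def W_sM_def in_orlicz_def)
    have uAE: "AE y in lborel. y \<notin> \<Omega> \<longrightarrow> u y = 0" using u by (simp add: W0_tilde_def)
    define Phi where "Phi = frac_modular s M u"
    have Phifin: "Phi < \<infinity>" using u by (simp add: W0_tilde_def W_sM_def Phi_def)
    have Phi1: "Phi > 1"
    proof (rule ccontr)
      assume "\<not> Phi > 1"
      then have "frac_modular s M (\<lambda>x. u x / 1) \<le> 1" by (simp add: Phi_def)
      then have "ennreal 1 \<in> {ennreal l | l. l > 0 \<and> frac_modular s M (\<lambda>x. u x / l) \<le> 1}"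
        unfolding mem_Collect_eq by (intro exI[of _ "1::real"]) simp
      then have "Inf {ennreal l | l. l > 0 \<and> frac_modular s M (\<lambda>x. u x / l) \<le> 1} \<le> ennreal 1" by (rule Inf_lower)
      then have "frac_seminorm s M u \<le> 1" by (simp add: frac_seminorm_def)
      then show False using sn by simp
    qed
    define phi where "phi = enn2real Phi"
    have Phiphi: "Phi = ennreal phi" using Phifin by (simp add: phi_def ennreal_enn2real_if)
    have phi1: "phi > 1" using Phi1 Phiphi by simp
    define Mx where "Mx x = indicator \<Omega> x * M (u x / D powr s)" for x
    have Mxnn: "Mx x \<ge> 0" for x using Mnn by (simp add: Mx_def)
    have Mxm: "Mx \<in> borel_measurable lborel"
    proof -
      have "(\<lambda>x. u x / D powr s) \<in> borel_measurable lborel" using um by simp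
      then have "(\<lambda>x. M (u x / D powr s)) \<in> borel_measurable lborel" by (rule measurable_compose[OF _ Mmeas])
      moreover have "indicator \<Omega> \<in> borel_measurable lborel" using Omeas by simp
      ultimately show ?thesis unfolding Mx_def by (rule borel_measurable_times[rotated])
    qed
    define P where "P = (\<integral>\<^sup>+x. ennreal (Mx x) \<partial>lborel)"
    have i: "ennreal (e / D ^ N) * P \<le> Phi"
    proof -
      have "ennreal (e / D ^ N) * P = (\<integral>\<^sup>+x. ennreal (e / D ^ N) * ennreal (Mx x) \<partial>lborel)"
        unfolding P_def using Mxm by (intro nn_integral_cmult[symmetric]) auto
      also have "\<dots> \<le> Phi"
        unfolding Phi_def frac_modular_def N_def[symmetric]
      proof (rule nn_integral_mono)
        fix x
        show "ennreal (e / D ^ N) * ennreal (Mx x) \<le> (\<integral>\<^sup>+ y. ennreal (M ((u x - u y) / norm (x - y) powr s) / norm (x - y) ^ N) \<partial>lborel)"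
        proof (cases "x \<in> \<Omega>")
          case False then show ?thesis by (simp add: Mx_def)
        next
          case True
          have "ennreal (e / D ^ N) * ennreal (Mx x) = ennreal (M (u x / D powr s) / D ^ N) * emeasure lborel E"
            using True e0 D0 Mnn by (simp add: Mx_def eE ennreal_mult'[symmetric] mult.commute)
          also have "\<dots> = (\<integral>\<^sup>+ y. ennreal (M (u x / D powr s) / D ^ N) * indicator E y \<partial>lborel)"
            by (rule nn_integral_cmult_indicator[symmetric]) (simp add: E_def)
          also have "\<dots> \<le> (\<integral>\<^sup>+ y. ennreal (M ((u x - u y) / norm (x - y) powr s) / norm (x - y) ^ N) \<partial>lborel)"
          proof (rule nn_integral_mono_AE)
            show "AE y in lborel. ennreal (M (u x / D powr s) / D ^ N) * indicator E y \<le> ennreal (M ((u x - u y) / norm (x - y) powr s) / norm (x - y) ^ N)"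
              using uAE
            proof eventually_elim
              case (elim y)
              show ?case
              proof (cases "y \<in> E")
                case False then show ?thesis by simp
              next
                case yE: True
                then have uy: "u y = 0" using elim Eout by auto
                define n where "n = norm (x - y)"
                have n: "0 < n" "n \<le> D" using dist_le[OF True yE] by (auto simp: n_def)
                have "\<bar>u x / D powr s\<bar> \<le> \<bar>u x / n powr s\<bar>"
                  using n D0 s by (simp add: abs_divide divide_left_mono powr_mono2 mult_pos_pos)
                then have "M (u x / D powr s) \<le> M (u x / n powr s)" by (rule Mmono)
                moreover have "n ^ N \<le> D ^ N" using n by (simp add: power_mono)
                moreover have "0 < n ^ N" using n by simp
                ultimately have "M (u x / D powr s) / D ^ N \<le> M (u x / n powr s) / n ^ N"
                  using Mnn by (meson divide_mono)
                then show ?thesis using yE uy by (simp add: n_def ennreal_leI)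
              qed
            qed
          qed
          finally show ?thesis .
        qed
      qed
      finally show ?thesis .
    qed
    have Pfin: "P < \<infinity>"
    proof -
      have "ennreal (e / D ^ N) * P < top" using i Phifin by (simp add: le_less_trans)
      moreover have "ennreal (e / D ^ N) \<noteq> 0" using e0 D0 by simp
      ultimately show ?thesis by (auto simp: ennreal_mult_less_top)
    qed
    define pp where "pp = enn2real P"
    have PP: "P = ennreal pp" using Pfin by (simp add: pp_def ennreal_enn2real_if)
    have pp0: "pp \<ge> 0" by (simp add: pp_def)
    have ppb: "pp \<le> D ^ N * phi / e"
    proof -
      have "ennreal (e / D ^ N * pp) = ennreal (e / D ^ N) * ennreal pp"
        by (rule ennreal_mult) (use e0 D0 pp0 in auto)
      then have "ennreal (e / D ^ N * pp) \<le> ennreal phi" using i PP Phiphi by simp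
      then have "e / D ^ N * pp \<le> phi" using phi1 by (simp add: ennreal_le_iff)
      then show ?thesis using e0 D0 by (simp add: field_simps)
    qed
    define f where "f x = indicator \<Omega> x *\<^sub>R primitive g x (u x)" for x
    have K1nn: "K1 \<ge> 0" using C by (simp add: K1_def)
    have K2nn: "K2 \<ge> 0" using C by (simp add: K2_def)
    have pw: "ennreal (norm (f x)) \<le> ennreal K1 * indicator \<Omega> x + ennreal K2 * ennreal (Mx x)" for x
    proof (cases "x \<in> \<Omega>")
      case False then show ?thesis by (simp add: f_def)
    next
      case True
      have G: "C1 * \<bar>u x\<bar> powr q \<le> primitive g x (u x)" "primitive g x (u x) \<le> C2 * \<bar>u x\<bar> powr q"
        using B True by auto
      have "0 \<le> C1 * \<bar>u x\<bar> powr q" using C by simp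
      then have nf: "norm (f x) = primitive g x (u x)" using G True by (simp add: f_def)
      have pb: "\<bar>u x\<bar> powr q \<le> D powr (s*q) * (T powr q + M (u x / D powr s))"
        by (rule powr_bound[OF Mev Tb Mnn T1 D0 q0 s(1)])
      have "norm (f x) \<le> C2 * (D powr (s*q) * (T powr q + M (u x / D powr s)))"
        using nf G(2) pb C by (metis mult_left_mono order_trans less_imp_le)
      also have "\<dots> = K1 + K2 * Mx x" using True by (simp add: K1_def K2_def Mx_def algebra_simps)
      finally have "ennreal (norm (f x)) \<le> ennreal (K1 + K2 * Mx x)" by (rule ennreal_leI)
      also have "\<dots> = ennreal K1 + ennreal K2 * ennreal (Mx x)"
        using K1nn K2nn Mxnn[of x] by (simp add: ennreal_plus ennreal_mult)
      finally show ?thesis using True by simp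
    qed
    have nnb: "(\<integral>\<^sup>+x. ennreal (norm (f x)) \<partial>lborel) \<le> ennreal (K1 * v + K2 * pp)"
    proof -
      have "(\<integral>\<^sup>+x. ennreal (norm (f x)) \<partial>lborel) \<le> (\<integral>\<^sup>+x. ennreal K1 * indicator \<Omega> x + ennreal K2 * ennreal (Mx x) \<partial>lborel)"
        by (rule nn_integral_mono) (rule pw)
      also have "\<dots> = (\<integral>\<^sup>+x. ennreal K1 * indicator \<Omega> x \<partial>lborel) + (\<integral>\<^sup>+x. ennreal K2 * ennreal (Mx x) \<partial>lborel)"
        using Omeas Mxm by (intro nn_integral_add) auto
      also have "\<dots> = ennreal K1 * emeasure lborel \<Omega> + ennreal K2 * P"
        unfolding P_def using Omeas Mxm by (simp add: nn_integral_cmult_indicator nn_integral_cmult)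
      also have "\<dots> = ennreal (K1 * v + K2 * pp)"
        using K1nn K2nn v0 pp0 by (simp add: vO PP ennreal_plus ennreal_mult)
      finally show ?thesis .
    qed
    have Kvp: "K1 * v + K2 * pp \<ge> 0" using K1nn K2nn v0 pp0 by simp
    have Lb: "\<bar>LINT x:\<Omega>|lborel. primitive g x (u x)\<bar> \<le> K1 * v + K2 * pp"
    proof -
      have L: "(LINT x:\<Omega>|lborel. primitive g x (u x)) = integral\<^sup>L lborel f"
        unfolding set_lebesgue_integral_def f_def[abs_def] by simp
      show ?thesis
      proof (cases "integrable lborel f")
        case True
        have "ennreal (norm (integral\<^sup>L lborel f)) \<le> ennreal (K1 * v + K2 * pp)"
          using integral_norm_bound_ennreal[OF True] nnb by (rule order_trans)
        then have "norm (integral\<^sup>L lborel f) \<le> K1 * v + K2 * pp" using Kvp by (simp add: ennreal_le_iff)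
        then show ?thesis using L by simp
      next
        case False
        then show ?thesis using L Kvp by (simp add: not_integrable_integral_eq)
      qed
    qed
    have "K2 * pp \<le> K2 * (D ^ N * phi / e)" using ppb K2nn by (rule mult_left_mono)
    also have "\<dots> = a * phi" by (simp add: a_def)
    finally have Lab: "\<bar>LINT x:\<Omega>|lborel. primitive g x (u x)\<bar> \<le> b + a * phi" using Lb by (simp add: b_def)
    have en: "energy s M \<Omega> g lam u = phi - lam * (LINT x:\<Omega>|lborel. primitive g x (u x))"
      by (simp add: energy_def phi_def Phi_def)
    have "lam * (LINT x:\<Omega>|lborel. primitive g x (u x)) \<le> lam * (b + a * phi)"
      using Lab lam0 by (intro mult_left_mono) auto
    also have "\<dots> = lam * b + (lam * a) * phi" by (simp add: algebra_simps)
    also have "(lam * a) * phi \<le> (1/2) * phi" using lama phi1 by (intro mult_right_mono) auto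
    finally show "1/4 \<le> energy s M \<Omega> g lam u" using en lamb phi1 by linarith
  qed
  qed
qed

end
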